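(* Suppose each $f_v$ is $K_v$-Lipschitz. Then for every partition $\mathcal P$ of $V(G)$ into sets of size $r$ and $T=T_{\vec B,\mathcal P}$, $$|\mathbb E_{\vec B}(\xi)|\le\frac1{nr(r-1)}\sum_{v\in V(G)}\frac{|\mathcal P_v\cap\mathcal N(v)|}{d(v)}K_v.$$
   Context: Let $n,p,q$ be positive integers, $r=p+q$, $G$ a finite simple graph with $|V(G)|=rn$ and no isolated vertices; $\mathcal N(v)$, $d(v)$ neighbor set and degree. For each $v$, $f_v:2^{\mathcal N(v)}\to\mathbb R$ with $f_v(\emptyset)=0$. $\sigma_T(v)=q$ if $v\in T$, $-p$ otherwise; for $|T|=pn$, $\xi=\frac1{pqn}\sum_v\sigma_T(v)f_v(T\cap\mathcal N(v))$. $f_v$ is $K_v$-Lipschitz ($K_v>0$) if $|f_v(A)-f_v(A')|\le K_v|A\triangle A'|/d(v)$ for all $A,A'\subseteq\mathcal N(v)$. Restricted randomization: for $\mathcal P=(S_1,\dots,S_n)$, $S_i=\{w_i^1,\dots,w_i^r\}$, $B_1,\dots,B_n$ i.i.d. uniform $p$-subsets of $\{1,\dots,r\}$, $T_{\vec B,\mathcal P}=\{w_i^j:j\in B_i\}$; $\mathcal P_v$ is the block containing $v$. *)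

theory Defs
  imports "HOL-Probability.Probability"
begin

definition simple_graph :: "'a set \<Rightarrow> ('a \<Rightarrow> 'a \<Rightarrow> bool) \<Rightarrow> bool" where
  "simple_graph V E \<longleftrightarrow> finite V \<and> (\<forall>u v. E u v \<longrightarrow> E v u) \<and> (\<forall>v. \<not> E v v)
      \<and> (\<forall>u v. E u v \<longrightarrow> u \<in> V \<and> v \<in> V)"

definition nbhd :: "'a set \<Rightarrow> ('a \<Rightarrow> 'a \<Rightarrow> bool) \<Rightarrow> 'a \<Rightarrow> 'a set" where
  "nbhd V E v = {u \<in> V. E v u}"

definition deg :: "'a set \<Rightarrow> ('a \<Rightarrow> 'a \<Rightarrow> bool) \<Rightarrow> 'a \<Rightarrow> nat" where
  "deg V E v = card (nbhd V E v)"

definition lipschitz_fv ::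
  "'a set \<Rightarrow> ('a \<Rightarrow> 'a \<Rightarrow> bool) \<Rightarrow> ('a set \<Rightarrow> real) \<Rightarrow> real \<Rightarrow> 'a \<Rightarrow> bool" where
  "lipschitz_fv V E fv K v \<longleftrightarrow>
     (\<forall>A A'. A \<subseteq> nbhd V E v \<longrightarrow> A' \<subseteq> nbhd V E v \<longrightarrow>
        \<bar>fv A - fv A'\<bar> \<le> K * real (card ((A - A') \<union> (A' - A))) / real (deg V E v))"

definition sigma :: "nat \<Rightarrow> nat \<Rightarrow> 'a set \<Rightarrow> 'a \<Rightarrow> real" where
  "sigma p q T v = (if v \<in> T then real q else - real p)"

definition xi :: "nat \<Rightarrow> nat \<Rightarrow> nat \<Rightarrow> 'a set \<Rightarrow> ('a \<Rightarrow> 'a \<Rightarrow> bool)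
                   \<Rightarrow> ('a \<Rightarrow> 'a set \<Rightarrow> real) \<Rightarrow> 'a set \<Rightarrow> real" where
  "xi n p q V E f T =
     (1 / (real p * real q * real n)) * (\<Sum>v\<in>V. sigma p q T v * f v (T \<inter> nbhd V E v))"

text \<open>Restricted randomization. The partition P = (S_0,...,S_{n-1}) with
S_i = {w i 1, ..., w i r} is given by w; B ranges over the choices of one
p-subset of {1..r} for each block i < n.\<close>

definition choices :: "nat \<Rightarrow> nat \<Rightarrow> nat \<Rightarrow> (nat \<Rightarrow> nat set) set" where
  "choices n p r = PiE {..<n} (\<lambda>_. {A. A \<subseteq> {1..r} \<and> card A = p})"

definition T_of :: "(nat \<Rightarrow> nat \<Rightarrow> 'a) \<Rightarrow> nat \<Rightarrow> (nat \<Rightarrow> nat set) \<Rightarrow> 'a set" where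
  "T_of w n B = {w i j | i j. i < n \<and> j \<in> B i}"

text \<open>Expectation over B_1,...,B_n i.i.d. uniform p-subsets of {1..r}
(i.e. uniform distribution on the product set).\<close>
definition expect_B :: "nat \<Rightarrow> nat \<Rightarrow> nat \<Rightarrow> ((nat \<Rightarrow> nat set) \<Rightarrow> real) \<Rightarrow> real" where
  "expect_B n p r X = measure_pmf.expectation (pmf_of_set (choices n p r)) X"

definition block_of :: "(nat \<Rightarrow> nat \<Rightarrow> 'a) \<Rightarrow> nat \<Rightarrow> nat \<Rightarrow> 'a \<Rightarrow> 'a set" where
  "block_of w n r v = (\<Union>i\<in>{i. i < n \<and> v \<in> w i ` {1..r}}. w i ` {1..r})"

end

theory Submission
  imports Defs
begin


lemma card_sub:
  assumes "a \<in> {1..r}" "b \<in> {1..(r::nat)}" "a \<noteq> b" "p > 0"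
  shows "card {A. A \<subseteq> {1..r} \<and> card A = p \<and> a \<in> A \<and> b \<notin> A} = (r-2) choose (p-1)"
proof -
  let ?D = "{A'. A' \<subseteq> {1..r}-{a,b} \<and> card A' = p-1}"
  have eq: "{A. A \<subseteq> {1..r} \<and> card A = p \<and> a \<in> A \<and> b \<notin> A} = insert a ` ?D"
  proof
    show "insert a ` ?D \<subseteq> {A. A \<subseteq> {1..r} \<and> card A = p \<and> a \<in> A \<and> b \<notin> A}"
    proof
      fix X assume "X \<in> insert a ` ?D"
      then obtain A' where A': "A' \<in> ?D" "X = insert a A'" by blast
      have fin: "finite A'" using A' finite_subset[of A' "{1..r}"] by auto
      have "card X = Suc (p-1)" using A' fin by (auto simp: card_insert_if)
      then show "X \<in> {A. A \<subseteq> {1..r} \<and> card A = p \<and> a \<in> A \<and> b \<notin> A}"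
        using A' assms by auto
    qed
  next
    show "{A. A \<subseteq> {1..r} \<and> card A = p \<and> a \<in> A \<and> b \<notin> A} \<subseteq> insert a ` ?D"
    proof
      fix X assume X: "X \<in> {A. A \<subseteq> {1..r} \<and> card A = p \<and> a \<in> A \<and> b \<notin> A}"
      have fin: "finite X" using X finite_subset[of X "{1..r}"] by auto
      have "X - {a} \<in> ?D" using X fin by auto
      moreover have "X = insert a (X - {a})" using X by auto
      ultimately show "X \<in> insert a ` ?D" by blast
    qed
  qed
  have inj: "inj_on (insert a) ?D"
  proof (rule inj_onI)
    fix X Y assume "X \<in> ?D" "Y \<in> ?D" "insert a X = insert a Y"
    then have "a \<notin> X" "a \<notin> Y" by auto
    then show "X = Y" using \<open>insert a X = insert a Y\<close> by (metis Diff_insert_absorb)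
  qed
  have "card ?D = card ({1..r}-{a,b}) choose (p-1)" by (rule n_subsets) auto
  moreover have "card ({1..r}-{a,b}) = r - 2" using assms by (simp add: card_Diff_subset)
  ultimately have "card ?D = (r-2) choose (p-1)" by simp
  moreover have "card (insert a ` ?D) = card ?D" by (rule card_image[OF inj])
  ultimately show ?thesis by (simp only: eq)
qed

lemma my_PiE_restrict:
  assumes "i0 \<in> I"
  shows "{B \<in> PiE I F. P (B i0)} = PiE I (\<lambda>i. if i = i0 then {x\<in>F i. P x} else F i)"
proof (rule set_eqI)
  fix B
  show "B \<in> {B \<in> PiE I F. P (B i0)} \<longleftrightarrow> B \<in> PiE I (\<lambda>i. if i = i0 then {x\<in>F i. P x} else F i)"
  proof
    assume "B \<in> {B \<in> PiE I F. P (B i0)}"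
    then show "B \<in> PiE I (\<lambda>i. if i = i0 then {x\<in>F i. P x} else F i)" by (auto simp: PiE_iff)
  next
    assume h: "B \<in> PiE I (\<lambda>i. if i = i0 then {x\<in>F i. P x} else F i)"
    then have "\<forall>i\<in>I. B i \<in> F i" by (auto simp: PiE_iff split: if_splits)
    moreover have "P (B i0)" using h assms by (auto simp: PiE_iff)
    moreover have "B \<in> extensional I" using h by (simp add: PiE_iff)
    ultimately show "B \<in> {B \<in> PiE I F. P (B i0)}" by (simp add: PiE_iff)
  qed
qed

lemma prod_if_one:
  assumes "i0 \<in> I" "finite I"
  shows "(\<Prod>i\<in>I. if i = i0 then a else b) = (a::nat) * b ^ (card I - 1)"
proof -
  have 1: "(\<Prod>i\<in>I. if i = i0 then a else b) = (if i0 = i0 then a else b) * (\<Prod>i\<in>I-{i0}. if i = i0 then a else b)"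
    by (rule prod.remove[OF assms(2) assms(1)])
  have 2: "(\<Prod>i\<in>I-{i0}. if i = i0 then a else b) = (\<Prod>i\<in>I-{i0}. b)" by (rule prod.cong) auto
  have 3: "(\<Prod>i\<in>I-{i0}. b) = b ^ (card I - 1)" using assms by (simp add: card_Diff_singleton)
  show ?thesis using 1 2 3 by simp
qed

lemma card_Sset: "card {A. A \<subseteq> {1..r} \<and> card A = p} = r choose p"
  using n_subsets[of "{1..r}" p] by simp

lemma card_choices: "card (choices n p r) = (r choose p) ^ n"
  unfolding choices_def using card_Sset[of r p] by (simp add: card_PiE)

lemma finite_choices: "finite (choices n p r)"
  unfolding choices_def by (rule finite_PiE) auto

lemma count_lemma:
  assumes "i0 < n" "a \<in> {1..r}" "b \<in> {1..(r::nat)}" "a \<noteq> b" "p > 0"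
  shows "card {B \<in> choices n p r. a \<in> B i0 \<and> b \<notin> B i0} = ((r-2) choose (p-1)) * (r choose p)^(n-1)"
proof -
  have seq: "{B \<in> choices n p r. a \<in> B i0 \<and> b \<notin> B i0} = PiE {..<n} (\<lambda>i. if i = i0 then
      {x\<in>{A. A \<subseteq> {1..r} \<and> card A = p}. a \<in> x \<and> b \<notin> x} else {A. A \<subseteq> {1..r} \<and> card A = p})"
    unfolding choices_def using assms(1) by (intro my_PiE_restrict) simp
  have "card {B \<in> choices n p r. a \<in> B i0 \<and> b \<notin> B i0} = (\<Prod>i<n. if i = i0 then ((r-2) choose (p-1)) else (r choose p))"
  proof -
    have e: "{x\<in>{A. A \<subseteq> {1..r} \<and> card A = p}. a \<in> x \<and> b \<notin> x} = {A. A \<subseteq> {1..r} \<and> card A = p \<and> a \<in> A \<and> b \<notin> A}"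
      by blast
    show ?thesis
      unfolding seq
      apply (subst card_PiE[OF finite_lessThan])
      apply (rule prod.cong, rule refl)
      apply (simp only: e card_sub[OF assms(2-5)] card_Sset split: if_splits)
      apply blast
      done
  qed
  also have "\<dots> = ((r-2) choose (p-1)) * (r choose p)^(n-1)"
  proof -
    have "i0 \<in> {..<n}" using assms(1) by simp
    from prod_if_one[OF this finite_lessThan, of "(r-2) choose (p-1)" "r choose p"]
    show ?thesis by (simp only: card_lessThan)
  qed
  finally show ?thesis .
qed

lemma binom_id:
  assumes "p > 0" "q > 0"
  shows "((p+q) choose p) * p * q = (p+q) * (p+q-1) * ((p+q-2) choose (p-1))"
proof -
  obtain P Q where P: "p = Suc P" "q = Suc Q" using assms by (metis gr0_implies_Suc)
  define N where "N = P + Q"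
  have 1: "Suc (Suc N) * (Suc N choose P) = (Suc (Suc N) choose Suc P) * Suc P"
    by (rule Suc_times_binomial_eq)
  have 2: "(Suc N - P) * (Suc N choose P) = Suc N * ((Suc N - 1) choose P)"
    by (rule binomial_absorb_comp)
  have 3: "Suc N - P = Suc Q" "Suc N - 1 = N" by (simp_all add: N_def)
  have e: "Suc P + Suc Q = Suc (Suc N)" "Suc P + Suc Q - 1 = Suc N" "Suc P + Suc Q - 2 = N" "Suc P - 1 = P" "Suc (Suc N) - 1 = Suc N" "Suc (Suc N) - 2 = N" by (simp_all add: N_def)
  have "((p+q) choose p) * p * q = ((Suc (Suc N) choose Suc P) * Suc P) * Suc Q"
    unfolding P e(1) by (rule refl)
  also have "\<dots> = (Suc (Suc N) * (Suc N choose P)) * Suc Q" by (simp only: 1)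
  also have "\<dots> = Suc (Suc N) * ((Suc Q) * (Suc N choose P))" by (simp only: ac_simps)
  also have "\<dots> = Suc (Suc N) * (Suc N * (N choose P))" by (simp only: 3(1)[symmetric] 2 3(2))
  also have "\<dots> = (p+q) * (p+q-1) * ((p+q-2) choose (p-1))" unfolding P e(1) e(4) e(5) e(6) by (simp only: ac_simps)
  finally show ?thesis .
qed



lemma T_of_mem: "x \<in> T_of w n B \<longleftrightarrow> (\<exists>i k. x = w i k \<and> i < n \<and> k \<in> B i)"
  unfolding T_of_def by blast

lemma choices_mem: "B \<in> choices n p r \<Longrightarrow> i < n \<Longrightarrow> B i \<subseteq> {1..r} \<and> card (B i) = p"
  unfolding choices_def by (auto simp: PiE_iff)

lemma choices_upd:
  assumes "B \<in> choices n p r" "i0 < n" "A \<subseteq> {1..r}" "card A = p"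
  shows "B(i0 := A) \<in> choices n p r"
proof -
  have "A \<in> {A. A \<subseteq> {1..r} \<and> card A = p}" using assms by simp
  from PiE_fun_upd[of A "\<lambda>_. {A. A \<subseteq> {1..r} \<and> card A = p}" i0 B "{..<n}", OF this] assms(1,2) show ?thesis
    unfolding choices_def by (simp add: insert_absorb)
qed

lemma T_of_v:
  assumes inj: "inj_on (\<lambda>(i,j). w i j) ({..<n} \<times> {1..r})"
    and B: "B \<in> choices n p r" and i0: "i0 < n" and j0: "j0 \<in> {1..r}"
  shows "w i0 j0 \<in> T_of w n B \<longleftrightarrow> j0 \<in> B i0"
proof
  assume "w i0 j0 \<in> T_of w n B"
  then obtain i k where ik: "w i0 j0 = w i k" "i < n" "k \<in> B i" by (auto simp: T_of_mem)
  have "k \<in> {1..r}" using choices_mem[OF B ik(2)] ik(3) by blast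
  then have "(i0, j0) = (i, k)" using inj ik i0 j0 unfolding inj_on_def by (metis (no_types, lifting) SigmaI case_prod_conv lessThan_iff)
  then show "j0 \<in> B i0" using ik by simp
next
  assume "j0 \<in> B i0" then show "w i0 j0 \<in> T_of w n B" using i0 by (auto simp: T_of_mem)
qed


lemma T_diff:
  assumes "j0 \<in> B i0" "j \<notin> B i0"
  shows "T_of w n B - T_of w n (B(i0 := insert j (B i0 - {j0}))) \<subseteq> {w i0 j0}"
    and "T_of w n (B(i0 := insert j (B i0 - {j0}))) - T_of w n B \<subseteq> {w i0 j}"
proof -
  show "T_of w n B - T_of w n (B(i0 := insert j (B i0 - {j0}))) \<subseteq> {w i0 j0}"
  proof
    fix x assume x: "x \<in> T_of w n B - T_of w n (B(i0 := insert j (B i0 - {j0})))"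
    then obtain i k where ik: "x = w i k" "i < n" "k \<in> B i" by (auto simp: T_of_mem)
    have "\<not> (\<exists>i k'. x = w i k' \<and> i < n \<and> k' \<in> (B(i0 := insert j (B i0 - {j0}))) i)"
      using x by (simp add: T_of_mem)
    moreover have "k \<in> (B(i0 := insert j (B i0 - {j0}))) i" if "\<not> (i = i0 \<and> k = j0)"
      using ik(3) that by (cases "i = i0") simp_all
    ultimately have "i = i0 \<and> k = j0" using ik(1,2) by blast
    then show "x \<in> {w i0 j0}" using ik by simp
  qed
  show "T_of w n (B(i0 := insert j (B i0 - {j0}))) - T_of w n B \<subseteq> {w i0 j}"
  proof
    fix x assume x: "x \<in> T_of w n (B(i0 := insert j (B i0 - {j0}))) - T_of w n B"
    then obtain i k where ik: "x = w i k" "i < n" "k \<in> (B(i0 := insert j (B i0 - {j0}))) i" by (auto simp: T_of_mem)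
    have "\<not> (\<exists>i k'. x = w i k' \<and> i < n \<and> k' \<in> B i)"
      using x by (simp add: T_of_mem)
    moreover have "k \<in> B i" if "\<not> (i = i0 \<and> k = j)"
      using ik(3) that assms by (cases "i = i0") auto
    ultimately have "i = i0 \<and> k = j" using ik(1,2) by blast
    then show "x \<in> {w i0 j}" using ik by simp
  qed
qed

lemma lip_step:
  assumes "j0 \<in> B i0" "j \<notin> B i0" "w i0 j0 \<notin> N" "L \<ge> 0"
    and lip: "\<forall>A A'. A \<subseteq> N \<longrightarrow> A' \<subseteq> N \<longrightarrow> \<bar>G A - G A'\<bar> \<le> L * real (card ((A - A') \<union> (A' - A)))"
  shows "\<bar>G (T_of w n B \<inter> N) - G (T_of w n (B(i0 := insert j (B i0 - {j0}))) \<inter> N)\<bar>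
         \<le> L * (if w i0 j \<in> N then 1 else 0)"
proof -
  let ?A = "T_of w n B \<inter> N" and ?A' = "T_of w n (B(i0 := insert j (B i0 - {j0}))) \<inter> N"
  have sub: "(?A - ?A') \<union> (?A' - ?A) \<subseteq> {w i0 j} \<inter> N"
  proof -
    have 1: "?A - ?A' \<subseteq> {w i0 j0} \<inter> N" using T_diff(1)[of j0 B i0 j w n, OF assms(1,2)] by blast
    have 2: "?A' - ?A \<subseteq> {w i0 j} \<inter> N" using T_diff(2)[of j0 B i0 j w n, OF assms(1,2)] by blast
    have 3: "{w i0 j0} \<inter> N = {}" using assms(3) by blast
    show ?thesis using 1 2 3 by blast
  qed
  have "card ((?A - ?A') \<union> (?A' - ?A)) \<le> card ({w i0 j} \<inter> N)"
    by (rule card_mono[OF _ sub]) simp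
  also have "card ({w i0 j} \<inter> N) = (if w i0 j \<in> N then 1 else 0)" by auto
  finally have c0: "card ((?A - ?A') \<union> (?A' - ?A)) \<le> (if w i0 j \<in> N then 1 else 0)" .
  have c: "real (card ((?A - ?A') \<union> (?A' - ?A))) \<le> (if w i0 j \<in> N then 1 else 0)"
    using c0 by (cases "w i0 j \<in> N") simp_all
  have s1: "?A \<subseteq> N" and s2: "?A' \<subseteq> N" by auto
  have "\<bar>G ?A - G ?A'\<bar> \<le> L * real (card ((?A - ?A') \<union> (?A' - ?A)))" using lip s1 s2 by simp
  also have "\<dots> \<le> L * (if w i0 j \<in> N then 1 else 0)"
    by (rule mult_left_mono[OF c assms(4)])
  finally show ?thesis .
qed


lemma card_swap:
  assumes "finite A" "x \<in> A" "y \<notin> A"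
  shows "card (insert y (A - {x})) = card A"
proof -
  have "card (insert y (A - {x})) = Suc (card (A - {x}))" using assms by simp
  also have "card (A - {x}) = card A - 1" using assms by (simp add: card_Diff_singleton)
  also have "card A > 0" using assms card_gt_0_iff by blast
  then have "Suc (card A - 1) = card A" by simp
  finally show ?thesis .
qed

lemma swap_mem:
  assumes B: "B \<in> choices n p r" and i0: "i0 < n" and x: "x \<in> B i0" and y: "y \<notin> B i0" "y \<in> {1..r}"
  shows "B(i0 := insert y (B i0 - {x})) \<in> choices n p r"
proof -
  have b: "B i0 \<subseteq> {1..r}" "card (B i0) = p" using choices_mem[OF B i0] by auto
  have f: "finite (B i0)" using b(1) finite_subset by blast
  show ?thesis
    by (rule choices_upd[OF B i0]) (use b y card_swap[OF f x y(1)] in auto)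
qed

lemma sum_pairs_ind:
  fixes g :: "nat \<Rightarrow> real"
  assumes fin: "finite C1"
  shows "(\<Sum>(B,j)\<in>Sigma C1 (\<lambda>B. {1..r} - B i0). g j)
         = (\<Sum>j\<in>{1..r}. g j * real (card {B \<in> C1. j \<notin> B i0}))"
proof -
  have "(\<Sum>(B,j)\<in>Sigma C1 (\<lambda>B. {1..r} - B i0). g j) = (\<Sum>B\<in>C1. \<Sum>j\<in>{1..r} - B i0. g j)"
    by (rule sum.Sigma[symmetric]) (simp_all add: fin)
  also have "\<dots> = (\<Sum>B\<in>C1. \<Sum>j\<in>{1..r}. if j \<notin> B i0 then g j else 0)"
  proof (rule sum.cong[OF refl])
    fix B assume "B \<in> C1"
    have "{1..r} - B i0 = {j \<in> {1..r}. j \<notin> B i0}" by blast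
    then show "(\<Sum>j\<in>{1..r} - B i0. g j) = (\<Sum>j\<in>{1..r}. if j \<notin> B i0 then g j else 0)"
      using sum.inter_filter[of "{1..r}" g "\<lambda>j. j \<notin> B i0"] by simp
  qed
  also have "\<dots> = (\<Sum>j\<in>{1..r}. \<Sum>B\<in>C1. if j \<notin> B i0 then g j else 0)" by (rule sum.swap)
  also have "\<dots> = (\<Sum>j\<in>{1..r}. g j * real (card {B \<in> C1. j \<notin> B i0}))"
  proof (rule sum.cong[OF refl])
    fix j
    have "(\<Sum>B\<in>C1. if j \<notin> B i0 then g j else 0) = (\<Sum>B\<in>{B \<in> C1. j \<notin> B i0}. g j)"
      using sum.inter_filter[of C1 "\<lambda>_. g j" "\<lambda>B. j \<notin> B i0", OF fin] by simp
    also have "\<dots> = g j * real (card {B \<in> C1. j \<notin> B i0})" by simp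
    finally show "(\<Sum>B\<in>C1. if j \<notin> B i0 then g j else 0) = g j * real (card {B \<in> C1. j \<notin> B i0})" .
  qed
  finally show ?thesis .
qed


lemma per_v:
  fixes w :: "nat \<Rightarrow> nat \<Rightarrow> 'a" and G :: "'a set \<Rightarrow> real"
  assumes inj: "inj_on (\<lambda>(i,j). w i j) ({..<n} \<times> {1..r})"
    and r: "r = p + q" and p: "p > 0" and q: "q > 0"
    and i0: "i0 < n" and j0: "j0 \<in> {1..r}"
    and vN: "w i0 j0 \<notin> N" and L: "L \<ge> 0"
    and lip: "\<forall>A A'. A \<subseteq> N \<longrightarrow> A' \<subseteq> N \<longrightarrow> \<bar>G A - G A'\<bar> \<le> L * real (card ((A - A') \<union> (A' - A)))"
  shows "\<bar>\<Sum>B\<in>choices n p r. sigma p q (T_of w n B) (w i0 j0) * G (T_of w n B \<inter> N)\<bar>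
     \<le> L * real (card {j\<in>{1..r}. w i0 j \<in> N}) * real (((r-2) choose (p-1)) * (r choose p)^(n-1))"
proof -
  define C where "C = choices n p r"
  define F where "F B = G (T_of w n B \<inter> N)" for B
  define h where "h = (\<lambda>(B::nat \<Rightarrow> nat set, j::nat). (B(i0 := insert j (B i0 - {j0})), j))"
  define h' where "h' = (\<lambda>(B::nat \<Rightarrow> nat set, j::nat). (B(i0 := insert j0 (B i0 - {j})), j))"
  define C1 where "C1 = {B\<in>C. j0 \<in> B i0}"
  define C0 where "C0 = {B\<in>C. j0 \<notin> B i0}"
  define X where "X = Sigma C1 (\<lambda>B. {1..r} - B i0)"
  define Y where "Y = Sigma C0 (\<lambda>B. B i0)"
  define cnt where "cnt = ((r-2) choose (p-1)) * (r choose p)^(n-1)"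
  define g where "g j = L * (if w i0 j \<in> N then 1 else 0)" for j
  have finC: "finite C" unfolding C_def by (rule finite_choices)
  have finC1: "finite C1" "finite C0" using finC by (simp_all add: C1_def C0_def)
  have Cb: "B i0 \<subseteq> {1..r}" "card (B i0) = p" "finite (B i0)" if "B \<in> C" for B
    using choices_mem[of B n p r i0] that i0 finite_subset[of "B i0" "{1..r}"] unfolding C_def by auto
  have sig: "sigma p q (T_of w n B) (w i0 j0) = (if j0 \<in> B i0 then real q else - real p)" if "B \<in> C" for B
    using T_of_v[OF inj _ i0 j0, of B p] that unfolding C_def sigma_def by simp
  have S1: "(\<Sum>B\<in>C. sigma p q (T_of w n B) (w i0 j0) * G (T_of w n B \<inter> N)) = real q * sum F C1 - real p * sum F C0"
  proof -
    have "(\<Sum>B\<in>C. sigma p q (T_of w n B) (w i0 j0) * G (T_of w n B \<inter> N))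
          = (\<Sum>B\<in>C. if j0 \<in> B i0 then real q * F B else - real p * F B)"
      by (rule sum.cong) (simp_all add: sig F_def)
    also have "\<dots> = sum (\<lambda>B. real q * F B) (C \<inter> {B. j0\<in>B i0}) + sum (\<lambda>B. - real p * F B) (C \<inter> - {B. j0 \<in> B i0})"
      by (rule sum.If_cases[OF finC])
    also have "C \<inter> {B. j0\<in>B i0} = C1" unfolding C1_def by blast
    also have "C \<inter> - {B. j0\<in>B i0} = C0" unfolding C0_def by blast
    finally show ?thesis by (simp add: sum_distrib_left sum_negf)
  qed
  have SX: "(\<Sum>(B,j)\<in>X. F B) = real q * sum F C1"
  proof -
    have "(\<Sum>(B,j)\<in>X. F B) = (\<Sum>B\<in>C1. \<Sum>j\<in>{1..r} - B i0. F B)"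
      unfolding X_def by (rule sum.Sigma[symmetric]) (simp_all add: finC1)
    also have "\<dots> = (\<Sum>B\<in>C1. real q * F B)"
    proof (rule sum.cong[OF refl])
      fix B assume "B \<in> C1"
      then have "B \<in> C" unfolding C1_def by simp
      then have "card ({1..r} - B i0) = q" using Cb[of B] r by (simp add: card_Diff_subset)
      then show "(\<Sum>j\<in>{1..r} - B i0. F B) = real q * F B" by simp
    qed
    finally show ?thesis by (simp add: sum_distrib_left)
  qed
  have SY: "(\<Sum>(B,j)\<in>Y. F B) = real p * sum F C0"
  proof -
    have "(\<Sum>(B,j)\<in>Y. F B) = (\<Sum>B\<in>C0. \<Sum>j\<in>B i0. F B)"
      unfolding Y_def by (rule sum.Sigma[symmetric]) (use finC1 Cb in \<open>auto simp: C0_def\<close>)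
    also have "\<dots> = (\<Sum>B\<in>C0. real p * F B)"
    proof (rule sum.cong[OF refl])
      fix B assume "B \<in> C0"
      then have "B \<in> C" unfolding C0_def by simp
      then show "(\<Sum>j\<in>B i0. F B) = real p * F B" using Cb[of B] by simp
    qed
    finally show ?thesis by (simp add: sum_distrib_left)
  qed
  have bij: "bij_betw h X Y"
  proof (rule bij_betw_byWitness[where f'=h'])
    show "\<forall>a\<in>X. h' (h a) = a"
    proof
      fix x assume "x \<in> X"
      then obtain B j where x: "x = (B,j)" "j0 \<in> B i0" "j \<notin> B i0"
        unfolding X_def C1_def by auto
      have "insert j0 (insert j (B i0 - {j0}) - {j}) = B i0" using x by auto
      then show "h' (h x) = x" unfolding x h_def h'_def by simp
    qed
    show "\<forall>a\<in>Y. h (h' a) = a"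
    proof
      fix x assume "x \<in> Y"
      then obtain B j where x: "x = (B,j)" "j0 \<notin> B i0" "j \<in> B i0"
        unfolding Y_def C0_def by auto
      have "insert j (insert j0 (B i0 - {j}) - {j0}) = B i0" using x by auto
      then show "h (h' x) = x" unfolding x h_def h'_def by simp
    qed
    show "h ` X \<subseteq> Y"
    proof
      fix y assume "y \<in> h ` X"
      then obtain x where "x \<in> X" "y = h x" by blast
      then obtain B j where x: "y = h (B,j)" "j0 \<in> B i0" "j \<notin> B i0" "j \<in> {1..r}" "B \<in> C"
        unfolding X_def C1_def by auto
      have "B(i0 := insert j (B i0 - {j0})) \<in> C"
        using swap_mem[of B n p r i0 j0 j] x i0 unfolding C_def by simp
      moreover have "j \<noteq> j0" using x by auto
      ultimately show "y \<in> Y" unfolding x h_def Y_def C0_def by simp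
    qed
    show "h' ` Y \<subseteq> X"
    proof
      fix y assume "y \<in> h' ` Y"
      then obtain x where "x \<in> Y" "y = h' x" by blast
      then obtain B j where x: "y = h' (B,j)" "j0 \<notin> B i0" "j \<in> B i0" "B \<in> C"
        unfolding Y_def C0_def by auto
      have "B(i0 := insert j0 (B i0 - {j})) \<in> C"
        using swap_mem[of B n p r i0 j j0] x i0 j0 unfolding C_def by simp
      moreover have "j \<noteq> j0" using x by auto
      moreover have "j \<in> {1..r}" using Cb[OF x(4)] x(3) by blast
      ultimately show "y \<in> X" unfolding x h'_def X_def C1_def by simp
    qed
  qed
  have SY': "(\<Sum>(B,j)\<in>Y. F B) = (\<Sum>x\<in>X. (\<lambda>(B,j). F B) (h x))"
    by (rule sum.reindex_bij_betw[OF bij, symmetric])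
  have tot: "(\<Sum>B\<in>C. sigma p q (T_of w n B) (w i0 j0) * G (T_of w n B \<inter> N))
      = (\<Sum>x\<in>X. (\<lambda>(B,j). F B) x - (\<lambda>(B,j). F B) (h x))"
    using S1 SX SY SY' by (simp add: sum_subtractf)
  have bnd: "\<bar>(\<lambda>(B,j). F B) x - (\<lambda>(B,j). F B) (h x)\<bar> \<le> (\<lambda>(B,j). g j) x" if "x \<in> X" for x
  proof -
    obtain B j where x: "x = (B,j)" by (cases x)
    have "j0 \<in> B i0" "j \<notin> B i0" using that x unfolding X_def C1_def by auto
    from lip_step[of j0 B i0 j w N L G n, OF this vN L lip]
    show ?thesis unfolding x h_def g_def F_def by simp
  qed
  have "\<bar>\<Sum>B\<in>C. sigma p q (T_of w n B) (w i0 j0) * G (T_of w n B \<inter> N)\<bar>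
       \<le> (\<Sum>x\<in>X. \<bar>(\<lambda>(B,j). F B) x - (\<lambda>(B,j). F B) (h x)\<bar>)"
    unfolding tot by (rule sum_abs)
  also have "\<dots> \<le> (\<Sum>x\<in>X. (\<lambda>(B,j). g j) x)" by (rule sum_mono) (rule bnd)
  also have "\<dots> = (\<Sum>j\<in>{1..r}. g j * real (card {B \<in> C1. j \<notin> B i0}))"
    unfolding X_def by (rule sum_pairs_ind[OF finC1(1)])
  also have "\<dots> = (\<Sum>j\<in>{1..r}. g j * real cnt)"
  proof (rule sum.cong[OF refl])
    fix j assume j: "j \<in> {1..r}"
    show "g j * real (card {B \<in> C1. j \<notin> B i0}) = g j * real cnt"
    proof (cases "j = j0")
      case True then show ?thesis using vN by (simp add: g_def)
    next
      case False
      have "{B \<in> C1. j \<notin> B i0} = {B \<in> choices n p r. j0 \<in> B i0 \<and> j \<notin> B i0}"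
        unfolding C1_def C_def by blast
      then have "card {B \<in> C1. j \<notin> B i0} = cnt"
        using count_lemma[OF i0 j0 j _ p] False unfolding cnt_def by simp
      then show ?thesis by simp
    qed
  qed
  also have "\<dots> = L * real (card {j\<in>{1..r}. w i0 j \<in> N}) * real cnt"
  proof -
    have "(\<Sum>j\<in>{1..r}. g j) = (\<Sum>j\<in>{1..r}. if w i0 j \<in> N then L else 0)"
      by (rule sum.cong) (simp_all add: g_def)
    also have "\<dots> = (\<Sum>j\<in>{j\<in>{1..r}. w i0 j \<in> N}. L)"
      by (rule sum.inter_filter[symmetric]) simp
    also have "\<dots> = L * real (card {j\<in>{1..r}. w i0 j \<in> N})" by simp
    finally show ?thesis by (simp add: sum_distrib_right[symmetric])
  qed
  finally show ?thesis unfolding C_def cnt_def .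
qed


theorem mainTheorem10:
  fixes n p q :: nat and V :: "'a set" and E :: "'a \<Rightarrow> 'a \<Rightarrow> bool"
    and f :: "'a \<Rightarrow> 'a set \<Rightarrow> real" and K :: "'a \<Rightarrow> real"
    and w :: "nat \<Rightarrow> nat \<Rightarrow> 'a"
  assumes "n > 0" and "p > 0" and "q > 0"
    and "simple_graph V E"
    and "card V = (p + q) * n"
    and "\<forall>v\<in>V. deg V E v > 0"
    and "\<forall>v\<in>V. f v {} = 0"
    and "\<forall>v\<in>V. K v > 0"
    and "\<forall>v\<in>V. lipschitz_fv V E (f v) (K v) v"
    and "bij_betw (\<lambda>(i, j). w i j) ({..<n} \<times> {1..p + q}) V"
  shows "\<bar>expect_B n p (p + q) (\<lambda>B. xi n p q V E f (T_of w n B))\<bar>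
     \<le> 1 / (real n * real (p + q) * (real (p + q) - 1)) *
        (\<Sum>v\<in>V. real (card (block_of w n (p + q) v \<inter> nbhd V E v)) / real (deg V E v) * K v)"
proof -
  define r where "r = p + q"
  have inj: "inj_on (\<lambda>(i,j). w i j) ({..<n} \<times> {1..r})" using assms(10) unfolding bij_betw_def r_def by auto
  have img: "(\<lambda>(i,j). w i j) ` ({..<n} \<times> {1..r}) = V" using assms(10) unfolding bij_betw_def r_def by auto
  have finV: "finite V" using assms(4) unfolding simple_graph_def by simp
  define C where "C = choices n p r"
  define cnt where "cnt = ((r-2) choose (p-1)) * (r choose p)^(n-1)"
  have finC: "finite C" unfolding C_def by (rule finite_choices)
  have cardC: "card C = (r choose p)^n" unfolding C_def by (rule card_choices)
  have "p \<le> r" unfolding r_def by simp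
  then have cpos: "card C > 0" unfolding cardC by simp
  then have Cne: "C \<noteq> {}" by auto
  have Eq: "expect_B n p r X = sum X C / real (card C)" for X
    unfolding expect_B_def C_def[symmetric] by (rule integral_pmf_of_set[OF Cne finC])
  define Sv where "Sv v = (\<Sum>B\<in>C. sigma p q (T_of w n B) v * f v (T_of w n B \<inter> nbhd V E v))" for v
  have sumxi: "(\<Sum>B\<in>C. xi n p q V E f (T_of w n B)) = 1 / (real p * real q * real n) * (\<Sum>v\<in>V. Sv v)"
  proof -
    have "(\<Sum>B\<in>C. xi n p q V E f (T_of w n B)) = (\<Sum>B\<in>C. 1 / (real p * real q * real n) *
        (\<Sum>v\<in>V. sigma p q (T_of w n B) v * f v (T_of w n B \<inter> nbhd V E v)))"
      by (simp add: xi_def)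
    also have "\<dots> = 1 / (real p * real q * real n) * (\<Sum>B\<in>C. \<Sum>v\<in>V. sigma p q (T_of w n B) v * f v (T_of w n B \<inter> nbhd V E v))"
      by (simp add: sum_distrib_left)
    also have "(\<Sum>B\<in>C. \<Sum>v\<in>V. sigma p q (T_of w n B) v * f v (T_of w n B \<inter> nbhd V E v))
        = (\<Sum>v\<in>V. \<Sum>B\<in>C. sigma p q (T_of w n B) v * f v (T_of w n B \<inter> nbhd V E v))"
      by (rule sum.swap)
    finally show ?thesis unfolding Sv_def .
  qed
  define m where "m v = real (card (block_of w n r v \<inter> nbhd V E v))" for v
  define L where "L v = K v / real (deg V E v)" for v
  have bound_v: "\<bar>Sv v\<bar> \<le> L v * m v * real cnt" if v: "v \<in> V" for v
  proof -
    obtain i0 j0 where ij: "i0 < n" "j0 \<in> {1..r}" "v = w i0 j0" using v img by auto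
    have vN: "w i0 j0 \<notin> nbhd V E v" using assms(4) unfolding simple_graph_def nbhd_def ij(3) by auto
    have Lnn: "L v \<ge> 0" using assms(6,8) v unfolding L_def by auto
    have lip0: "lipschitz_fv V E (f v) (K v) v" using assms(9) v by blast
    have lip: "\<forall>A A'. A \<subseteq> nbhd V E v \<longrightarrow> A' \<subseteq> nbhd V E v \<longrightarrow>
        \<bar>f v A - f v A'\<bar> \<le> L v * real (card ((A - A') \<union> (A' - A)))"
      using lip0 unfolding lipschitz_fv_def L_def by simp
    have blk: "block_of w n r v = w i0 ` {1..r}"
    proof -
      have "{i. i < n \<and> v \<in> w i ` {1..r}} = {i0}"
      proof
        show "{i0} \<subseteq> {i. i < n \<and> v \<in> w i ` {1..r}}" using ij by auto
        show "{i. i < n \<and> v \<in> w i ` {1..r}} \<subseteq> {i0}"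
        proof
          fix i assume "i \<in> {i. i < n \<and> v \<in> w i ` {1..r}}"
          then obtain k where k: "i < n" "k \<in> {1..r}" "v = w i k" by auto
          have e: "(\<lambda>(i,j). w i j) (i, k) = (\<lambda>(i,j). w i j) (i0, j0)" using k ij by simp
          have "(i, k) \<in> {..<n} \<times> {1..r}" "(i0, j0) \<in> {..<n} \<times> {1..r}" using k ij by auto
          from inj_onD[OF inj e this] show "i \<in> {i0}" by simp
        qed
      qed
      then show ?thesis unfolding block_of_def by simp
    qed
    have injw: "inj_on (w i0) {1..r}"
    proof (rule inj_onI)
      fix a b assume ab: "a \<in> {1..r}" "b \<in> {1..r}" "w i0 a = w i0 b"
      have e: "(\<lambda>(i,j). w i j) (i0, a) = (\<lambda>(i,j). w i j) (i0, b)" using ab by simp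
      have "(i0, a) \<in> {..<n} \<times> {1..r}" "(i0, b) \<in> {..<n} \<times> {1..r}" using ab ij by auto
      from inj_onD[OF inj e this] show "a = b" by simp
    qed
    have sub: "{j\<in>{1..r}. w i0 j \<in> nbhd V E v} \<subseteq> {1..r}" by blast
    have ie: "w i0 ` {1..r} \<inter> nbhd V E v = w i0 ` {j\<in>{1..r}. w i0 j \<in> nbhd V E v}" by blast
    have "card (w i0 ` {j\<in>{1..r}. w i0 j \<in> nbhd V E v}) = card {j\<in>{1..r}. w i0 j \<in> nbhd V E v}"
      by (rule card_image[OF inj_on_subset[OF injw sub]])
    then have mv: "m v = real (card {j\<in>{1..r}. w i0 j \<in> nbhd V E v})"
      unfolding m_def blk ie by simp
    have "\<bar>\<Sum>B\<in>choices n p r. sigma p q (T_of w n B) (w i0 j0) * f v (T_of w n B \<inter> nbhd V E v)\<bar>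
      \<le> L v * real (card {j\<in>{1..r}. w i0 j \<in> nbhd V E v}) * real (((r-2) choose (p-1)) * (r choose p)^(n-1))"
      by (rule per_v[OF inj r_def assms(2,3) ij(1,2) vN Lnn lip])
    then show ?thesis unfolding Sv_def C_def cnt_def mv using ij(3) by simp
  qed
  have key: "real cnt * (real r * (real r - 1)) = real (card C) * (real p * real q)"
  proof -
    have b: "(r choose p) * p * q = r * (r-1) * ((r-2) choose (p-1))"
      unfolding r_def by (rule binom_id[OF assms(2,3)])
    have pw: "(r choose p) * (r choose p)^(n-1) = (r choose p)^n" using assms(1)
      by (metis Suc_diff_1 power_Suc)
    have "cnt * (r * (r-1)) = (r*(r-1)*((r-2) choose (p-1))) * (r choose p)^(n-1)"
      unfolding cnt_def by (simp only: ac_simps)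
    also have "\<dots> = ((r choose p) * p * q) * (r choose p)^(n-1)" by (simp only: b)
    also have "\<dots> = ((r choose p) * (r choose p)^(n-1)) * (p * q)" by (simp only: ac_simps)
    also have "\<dots> = card C * (p * q)" by (simp only: cardC pw)
    finally have "cnt * (r * (r-1)) = card C * (p * q)" .
    then have "real (cnt * (r * (r-1))) = real (card C * (p * q))" by simp
    moreover have "real (r - 1) = real r - 1" using assms(2) unfolding r_def by simp
    ultimately show ?thesis by simp
  qed
  have r2: "real r * (real r - 1) > 0" using assms(2,3) unfolding r_def by simp
  have "\<bar>expect_B n p r (\<lambda>B. xi n p q V E f (T_of w n B))\<bar>
      = 1 / (real p * real q * real n) * \<bar>\<Sum>v\<in>V. Sv v\<bar> / real (card C)"
    unfolding Eq sumxi using assms(1-3) cpos by (simp add: abs_mult)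
  also have "\<dots> \<le> 1 / (real p * real q * real n) * (\<Sum>v\<in>V. L v * m v * real cnt) / real (card C)"
  proof -
    have "\<bar>\<Sum>v\<in>V. Sv v\<bar> \<le> (\<Sum>v\<in>V. \<bar>Sv v\<bar>)" by (rule sum_abs)
    also have "\<dots> \<le> (\<Sum>v\<in>V. L v * m v * real cnt)" by (rule sum_mono) (rule bound_v)
    finally have "\<bar>\<Sum>v\<in>V. Sv v\<bar> \<le> (\<Sum>v\<in>V. L v * m v * real cnt)" .
    then have "1 / (real p * real q * real n) * \<bar>\<Sum>v\<in>V. Sv v\<bar> \<le> 1 / (real p * real q * real n) * (\<Sum>v\<in>V. L v * m v * real cnt)"
      by (rule mult_left_mono) simp
    then show ?thesis by (rule divide_right_mono) simp
  qed
  also have "\<dots> = (real cnt / (real (card C) * (real p * real q) * real n)) * (\<Sum>v\<in>V. L v * m v)"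
  proof -
    have s: "(\<Sum>v\<in>V. L v * m v * real cnt) = (\<Sum>v\<in>V. L v * m v) * real cnt"
      by (rule sum_distrib_right[symmetric])
    show ?thesis unfolding s by (simp add: field_simps)
  qed
  also have "real cnt / (real (card C) * (real p * real q) * real n) = 1 / (real n * real r * (real r - 1))"
  proof -
    have D: "real (card C) * (real p * real q) * real n \<noteq> 0" using assms(1-3) cpos by simp
    have R: "real n * real r * (real r - 1) \<noteq> 0" using assms(1) r2
      by (metis mult.assoc mult_eq_0_iff of_nat_0_less_iff less_irrefl)
    have "real cnt * (real n * real r * (real r - 1)) = real n * (real cnt * (real r * (real r - 1)))"
      by (simp only: ac_simps)
    also have "\<dots> = 1 * (real (card C) * (real p * real q) * real n)" unfolding key by (simp only: ac_simps mult_1)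
    finally show ?thesis using frac_eq_eq[OF D R] by simp
  qed
  also have "(\<Sum>v\<in>V. L v * m v) = (\<Sum>v\<in>V. m v / real (deg V E v) * K v)"
    unfolding L_def by (rule sum.cong) simp_all
  finally show ?thesis unfolding r_def m_def .
qed

end
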